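(* Let $F,G:[0,T]\to\mathbb{R}^{D\times D}$ be continuous, and let $\Psi(t,s)$ be the transition matrix of $F$. Let $\Sigma_\tau$ solve $\frac{d\Sigma_\tau}{d\tau}=F_\tau\Sigma_\tau+\Sigma_\tau F_\tau^T+G_\tau G_\tau^T$, and let $I\subseteq[0,T]$ be an interval on which $\Sigma_\tau$ is positive definite. Let $R_\tau$ be continuously differentiable and invertible on $I$ with $R_\tau R_\tau^T=\Sigma_\tau$ and $\frac{dR_\tau}{d\tau}=(F_\tau+\tfrac12G_\tau G_\tau^T\Sigma_\tau^{-1})R_\tau$. Take $\lambda=0$: let $\hat\Psi$ be the transition matrix of $\hat F_\tau=F_\tau+\tfrac12G_\tau G_\tau^T\Sigma_\tau^{-1}$, and let $P_{s\tau}$ solve $\frac{dP_{s\tau}}{d\tau}=\hat F_\tau P_{s\tau}+P_{s\tau}\hat F_\tau^T$ with $P_{ss}=0$. Then for all $s,t\in I$, all $u(s)\in\mathbb{R}^D$ and all $\epsilon\in\mathbb{R}^D$, we have $P_{st}=0$ and $$\Psi(t,s)u(s)+[\hat\Psi(t,s)-\Psi(t,s)]R_s\epsilon=\Psi(t,s)u(s)+\Big[\int_s^t\tfrac12\Psi(t,\tau)G_\tau G_\tau^TR_\tau^{-T}\,d\tau\Big]\epsilon.$$ That is, the stochastic generalized-DDIM update $u(t)\sim\mathcal{N}(\Psi(t,s)u(s)+[\hat\Psi(t,s)-\Psi(t,s)]R_s\epsilon,P_{st})$ reduces to the deterministic generalized-DDIM update $u(t)=\Psi(t,s)u(s)+[\int_s^t\tfrac12\Psi(t,\tau)G_\tau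 G_\tau^TR_\tau^{-T}d\tau]\epsilon$.
   Context: The transition matrix $\Psi$ of $F$ satisfies $\partial_t\Psi(t,s)=F_t\Psi(t,s)$ with $\Psi(s,s)=I_D$, and similarly for $\hat\Psi$ with $\hat F$. The vector $\epsilon$ plays the role of the network output $\epsilon_\theta(u(s),s)$. *)

theory Defs
  imports "HOL-Analysis.Analysis"
begin

definition oint :: "real \<Rightarrow> real \<Rightarrow> (real \<Rightarrow> 'a::euclidean_space) \<Rightarrow> 'a" where
  "oint s t f = (if s \<le> t then integral {s..t} f else - integral {t..s} f)"

definition pos_def_mat :: "real^'n^'n \<Rightarrow> bool" where
  "pos_def_mat A \<longleftrightarrow> transpose A = A \<and> (\<forall>x. x \<noteq> 0 \<longrightarrow> x \<bullet> (A *v x) > 0)"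

end

theory Submission
  imports Defs
begin

lemma mm_radd: "((A::real^'n^'m) + B) ** C = A ** C + B ** C"
  by (vector matrix_matrix_mult_def sum.distrib distrib_right)

lemma bb_mm: "bounded_bilinear ((**) :: real^'n^'m \<Rightarrow> real^'p^'n \<Rightarrow> real^'p^'m)"
  unfolding bilinear_conv_bounded_bilinear[symmetric] bilinear_def linear_iff
  by (simp add: matrix_add_ldistrib mm_radd matrix_scalar_ac scalar_matrix_assoc)

lemma ode_zero_fwd:
  fixes Y Y' :: "real \<Rightarrow> 'a::real_inner"
  assumes c: "c \<le> x"
    and d: "\<And>y. y\<in>{c..x} \<Longrightarrow> (Y has_vector_derivative Y' y) (at y within {c..x})"
    and bnd: "\<And>y. y\<in>{c..x} \<Longrightarrow> norm (Y' y) \<le> L * norm (Y y)" and Y0: "Y c = 0"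
  shows "Y x = 0"
proof -
  define g where "g y = exp (-2*L*y) * (Y y \<bullet> Y y)" for y
  define g' where "g' y = exp (-2*L*y) * (-2*L*(Y y \<bullet> Y y)) + exp (-2*L*y) * (2*(Y y \<bullet> Y' y))" for y
  have gd: "(g has_derivative (\<lambda>h. h * g' y)) (at y within {c..x})" if y: "y \<in> {c..x}" for y
  proof -
    have d': "(Y has_derivative (\<lambda>h. h *\<^sub>R Y' y)) (at y within {c..x})"
      using d[OF y] by (simp add: has_vector_derivative_def)
    have "((\<lambda>y. Y y \<bullet> Y y) has_derivative (\<lambda>h. Y y \<bullet> (h *\<^sub>R Y' y) + (h *\<^sub>R Y' y) \<bullet> Y y)) (at y within {c..x})"
      by (rule has_derivative_inner[OF d' d'])
    then have i: "((\<lambda>y. Y y \<bullet> Y y) has_real_derivative (2*(Y y \<bullet> Y' y))) (at y within {c..x})"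
      unfolding has_field_derivative_def
      by (rule has_derivative_eq_rhs) (auto simp: inner_commute algebra_simps)
    have e: "((\<lambda>y. exp (-2*L*y)) has_real_derivative (exp (-2*L*y) * (-2*L))) (at y within {c..x})"
      by (auto intro!: derivative_eq_intros)
    have "(g has_real_derivative g' y) (at y within {c..x})"
      unfolding g_def g'_def using DERIV_mult[OF e i] by (simp add: algebra_simps)
    then show ?thesis unfolding has_field_derivative_def by (rule has_derivative_eq_rhs) (auto simp: mult.commute)
  qed
  obtain z where z: "z \<in> {c..x}" and eq: "g x - g c = (x - c) * g' z"
    using mvt_very_simple[OF c, of g "\<lambda>y h. h * g' y"] gd by auto
  have "Y z \<bullet> Y' z \<le> norm (Y z) * norm (Y' z)" by (metis Cauchy_Schwarz_ineq2 abs_le_iff)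
  also have "\<dots> \<le> norm (Y z) * (L * norm (Y z))" by (rule mult_left_mono[OF bnd[OF z]]) simp
  also have "\<dots> = L * (Y z \<bullet> Y z)" by (simp add: power2_norm_eq_inner[symmetric] power2_eq_square)
  finally have "g' z \<le> 0" unfolding g'_def
    by (simp add: algebra_simps)
  then have "g x \<le> 0" using eq c Y0 by (simp add: g_def mult_nonneg_nonpos)
  then have "Y x \<bullet> Y x \<le> 0" unfolding g_def by (simp add: mult_le_0_iff)
  then show ?thesis using inner_gt_zero_iff[of "Y x"] by linarith
qed

lemma ode_zero_bwd:
  fixes Y Y' :: "real \<Rightarrow> 'a::real_inner"
  assumes c: "x \<le> c"
    and d: "\<And>y. y\<in>{x..c} \<Longrightarrow> (Y has_vector_derivative Y' y) (at y within {x..c})"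
    and bnd: "\<And>y. y\<in>{x..c} \<Longrightarrow> norm (Y' y) \<le> L * norm (Y y)" and Y0: "Y c = 0"
  shows "Y x = 0"
proof -
  define g where "g y = exp (2*L*y) * (Y y \<bullet> Y y)" for y
  define g' where "g' y = exp (2*L*y) * (2*L*(Y y \<bullet> Y y)) + exp (2*L*y) * (2*(Y y \<bullet> Y' y))" for y
  have gd: "(g has_derivative (\<lambda>h. h * g' y)) (at y within {x..c})" if y: "y \<in> {x..c}" for y
  proof -
    have d': "(Y has_derivative (\<lambda>h. h *\<^sub>R Y' y)) (at y within {x..c})"
      using d[OF y] by (simp add: has_vector_derivative_def)
    have "((\<lambda>y. Y y \<bullet> Y y) has_derivative (\<lambda>h. Y y \<bullet> (h *\<^sub>R Y' y) + (h *\<^sub>R Y' y) \<bullet> Y y)) (at y within {x..c})"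
      by (rule has_derivative_inner[OF d' d'])
    then have i: "((\<lambda>y. Y y \<bullet> Y y) has_real_derivative (2*(Y y \<bullet> Y' y))) (at y within {x..c})"
      unfolding has_field_derivative_def
      by (rule has_derivative_eq_rhs) (auto simp: inner_commute algebra_simps)
    have e: "((\<lambda>y. exp (2*L*y)) has_real_derivative (exp (2*L*y) * (2*L))) (at y within {x..c})"
      by (auto intro!: derivative_eq_intros)
    have "(g has_real_derivative g' y) (at y within {x..c})"
      unfolding g_def g'_def using DERIV_mult[OF e i] by (simp add: algebra_simps)
    then show ?thesis unfolding has_field_derivative_def by (rule has_derivative_eq_rhs) (auto simp: mult.commute)
  qed
  obtain z where z: "z \<in> {x..c}" and eq: "g c - g x = (c - x) * g' z"
    using mvt_very_simple[OF c, of g "\<lambda>y h. h * g' y"] gd by auto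
  have "- (Y z \<bullet> Y' z) \<le> norm (Y z) * norm (Y' z)" by (metis Cauchy_Schwarz_ineq2 abs_le_iff)
  also have "\<dots> \<le> norm (Y z) * (L * norm (Y z))" by (rule mult_left_mono[OF bnd[OF z]]) simp
  also have "\<dots> = L * (Y z \<bullet> Y z)" by (simp add: power2_norm_eq_inner[symmetric] power2_eq_square)
  finally have "0 \<le> exp (2*L*z) * (2*(L * (Y z \<bullet> Y z) + Y z \<bullet> Y' z))"
    by (intro mult_nonneg_nonneg) auto
  then have "g' z \<ge> 0" unfolding g'_def
    by (simp add: algebra_simps)
  moreover have "(c - x) * g' z \<ge> 0" using \<open>g' z \<ge> 0\<close> c by simp
  moreover have "g c = 0" by (simp add: g_def Y0)
  ultimately have "g x \<le> 0" using eq by linarith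
  then have "Y x \<bullet> Y x \<le> 0" unfolding g_def by (simp add: mult_le_0_iff)
  then show ?thesis using inner_gt_zero_iff[of "Y x"] by linarith
qed

lemma ode_zero:
  fixes Y Y' :: "real \<Rightarrow> 'a::real_inner"
  assumes d: "\<And>y. y\<in>{a..b} \<Longrightarrow> (Y has_vector_derivative Y' y) (at y within {a..b})"
    and bnd: "\<And>y. y\<in>{a..b} \<Longrightarrow> norm (Y' y) \<le> L * norm (Y y)" and Y0: "Y c = 0"
    and c: "c \<in> {a..b}" and x: "x \<in> {a..b}"
  shows "Y x = 0"
proof (cases "c \<le> x")
  case True
  show ?thesis
  proof (rule ode_zero_fwd[of c x Y Y' L])
    fix y assume y: "y \<in> {c..x}"
    then have sub: "{c..x} \<subseteq> {a..b}" and "y \<in> {a..b}" using c x by auto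
    then show "(Y has_vector_derivative Y' y) (at y within {c..x})" "norm (Y' y) \<le> L * norm (Y y)"
      using has_vector_derivative_within_subset[OF d sub] bnd by auto
  qed (use Y0 True in auto)
next
  case False
  then have F: "x \<le> c" by simp
  show ?thesis
  proof (rule ode_zero_bwd[of x c Y Y' L])
    fix y assume y: "y \<in> {x..c}"
    then have sub: "{x..c} \<subseteq> {a..b}" and "y \<in> {a..b}" using c x by auto
    then show "(Y has_vector_derivative Y' y) (at y within {x..c})" "norm (Y' y) \<le> L * norm (Y y)"
      using has_vector_derivative_within_subset[OF d sub] bnd by auto
  qed (use Y0 F in auto)
qed

lemma cont_bound:
  fixes A :: "real \<Rightarrow> 'a::real_normed_vector"
  assumes "continuous_on {a..b} A"
  obtains M where "M > 0" "\<And>y. y \<in> {a..b} \<Longrightarrow> norm (A y) \<le> M"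
proof -
  have "bounded (A ` {a..b})"
    by (rule compact_imp_bounded[OF compact_continuous_image[OF assms compact_Icc]])
  then show ?thesis using that unfolding bounded_pos by auto
qed

lemma lin_ode_zero:
  fixes Y A B :: "real \<Rightarrow> real^'n^'n"
  assumes cA: "continuous_on {a..b} A" and cB: "continuous_on {a..b} B"
    and d: "\<And>y. y\<in>{a..b} \<Longrightarrow> (Y has_vector_derivative (A y ** Y y + Y y ** B y)) (at y within {a..b})"
    and Y0: "Y c = 0" and c: "c \<in> {a..b}" and x: "x \<in> {a..b}"
  shows "Y x = 0"
proof -
  obtain MA where MA: "\<And>y. y \<in> {a..b} \<Longrightarrow> norm (A y) \<le> MA" using cont_bound[OF cA] by blast
  obtain MB where MB: "\<And>y. y \<in> {a..b} \<Longrightarrow> norm (B y) \<le> MB" using cont_bound[OF cB] by blast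
  from bounded_bilinear.pos_bounded[OF bb_mm] obtain K where
    K0: "\<forall>a b. norm ((a::real^'n^'n) ** (b::real^'n^'n)) \<le> norm a * norm b * K" and K1: "K > 0" by blast
  note K = spec[OF spec[OF K0]] K1
  show ?thesis
  proof (rule ode_zero[OF d _ Y0 c x])
    fix y assume y: "y \<in> {a..b}"
    have "norm (A y ** Y y + Y y ** B y) \<le> norm (A y ** Y y) + norm (Y y ** B y)" by (rule norm_triangle_ineq)
    also have "\<dots> \<le> norm (A y) * norm (Y y) * K + norm (Y y) * norm (B y) * K"
      using K by (intro add_mono) auto
    also have "\<dots> \<le> MA * norm (Y y) * K + norm (Y y) * MB * K"
      using MA[OF y] MB[OF y] K(2)
      by (intro add_mono mult_right_mono mult_left_mono) auto
    also have "\<dots> = (K * (MA + MB)) * norm (Y y)" by (simp add: algebra_simps)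
    finally show "norm (A y ** Y y + Y y ** B y) \<le> (K * (MA + MB)) * norm (Y y)" .
  qed
qed

lemma minv: 
  fixes A :: "real^'n^'n"
  assumes "invertible A"
  shows "A ** matrix_inv A = mat 1" "matrix_inv A ** A = mat 1"
  using someI_ex[OF assms[unfolded invertible_def]] unfolding matrix_inv_def by auto

lemma minv_unique:
  fixes A X :: "real^'n^'n"
  assumes "invertible A" "X ** A = mat 1"
  shows "X = matrix_inv A"
  by (metis assms minv(1) matrix_mul_assoc matrix_mul_lid matrix_mul_rid)

lemma continuous_on_det[continuous_intros]:
  fixes M :: "real \<Rightarrow> real^'n^'n"
  assumes "continuous_on S M"
  shows "continuous_on S (\<lambda>x. det (M x))"
  unfolding det_def by (intro continuous_intros assms)

lemma matrix_inv_cramer: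
  fixes A :: "real^'n^'n"
  assumes "invertible A"
  shows "matrix_inv A = (\<chi> i j. det (\<chi> r c. if c = i then axis j 1 $ r else A$r$c) / det A)"
proof -
  have dz: "det A \<noteq> 0" using assms invertible_det_nz by blast
  have "matrix_inv A $ i $ j = det (\<chi> r c. if c = i then axis j 1 $ r else A$r$c) / det A" for i j
  proof -
    have "A *v (matrix_inv A *v axis j 1) = axis j 1"
      by (simp add: matrix_vector_mul_assoc minv[OF assms])
    then have "matrix_inv A *v axis j 1 = (\<chi> k. det(\<chi> r c. if c=k then axis j 1 $r else A$r$c) / det A)"
      using cramer[OF dz] by blast
    then have "(matrix_inv A *v axis j 1) $ i = det (\<chi> r c. if c = i then axis j 1 $ r else A$r$c) / det A"
      by simp
    then show ?thesis by (simp add: matrix_vector_mult_basis column_def)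
  qed
  then show ?thesis by (simp add: vec_eq_iff)
qed

lemma continuous_on_matrix_inv:
  fixes M :: "real \<Rightarrow> real^'n^'n"
  assumes cM: "continuous_on S M" and inv: "\<And>x. x \<in> S \<Longrightarrow> invertible (M x)"
  shows "continuous_on S (\<lambda>x. matrix_inv (M x))"
proof -
  have c1: "continuous_on S (\<lambda>x. \<chi> r c. if c = i then axis j 1 $ r else M x $ r $ c)" for i j
  proof (intro continuous_on_vec_lambda)
    fix r c show "continuous_on S (\<lambda>x. if c = i then axis j 1 $ r else M x $ r $ c)"
      by (cases "c = i") (auto intro!: continuous_intros cM)
  qed
  have "continuous_on S (\<lambda>x. (\<chi> i j. det (\<chi> r c. if c = i then axis j 1 $ r else M x$r$c) / det (M x)))"
    apply (rule continuous_on_vec_lambda)+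
    apply (rule continuous_on_divide)
      apply (rule continuous_on_det[OF c1])
     apply (rule continuous_on_det[OF cM])
    using inv invertible_det_nz by blast
  then show ?thesis
    by (rule continuous_on_cong[THEN iffD1, rotated -1]) (auto simp: matrix_inv_cramer inv)
qed

lemma mm_rdiff: "((A::real^'n^'m) - B) ** C = A ** C - B ** C"
  by (vector matrix_matrix_mult_def sum_subtractf right_diff_distrib left_diff_distrib)

lemma continuous_on_mm[continuous_intros]:
  "continuous_on S f \<Longrightarrow> continuous_on S g \<Longrightarrow> continuous_on S (\<lambda>x. (f x::real^'n^'m) ** (g x::real^'p^'n))"
  by (rule bounded_bilinear.continuous_on[OF bb_mm])

lemma continuous_on_transpose[continuous_intros]:
  "continuous_on S f \<Longrightarrow> continuous_on S (\<lambda>x. transpose (f x :: real^'n^'m))"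
  unfolding transpose_def by (intro continuous_on_vec_lambda continuous_on_component)

lemma deriv_cont:
  assumes "\<And>x. x \<in> S \<Longrightarrow> (f has_vector_derivative f' x) (at x within S)"
  shows "continuous_on S f"
  using assms has_vector_derivative_continuous continuous_on_eq_continuous_within by blast

lemma mm_const_deriv:
  assumes "(f has_vector_derivative f') (at x within S)"
  shows "((\<lambda>x. (f x :: real^'n^'m) ** (C::real^'p^'n)) has_vector_derivative (f' ** C)) (at x within S)"
  using bounded_bilinear.has_vector_derivative[OF bb_mm assms has_vector_derivative_const[of C]] by simp

lemma const_mm_deriv:
  assumes "(f has_vector_derivative f') (at x within S)"
  shows "((\<lambda>x. (C::real^'n^'m) ** (f x :: real^'p^'n)) has_vector_derivative (C ** f')) (at x within S)"
  using bounded_bilinear.has_vector_derivative[OF bb_mm has_vector_derivative_const[of C] assms] by simp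

lemma mm_ldiff: "(A::real^'n^'m) ** (B - C) = A ** B - A ** C"
  by (vector matrix_matrix_mult_def sum_subtractf right_diff_distrib left_diff_distrib)

lemma sc_l: "(k *\<^sub>R (A::real^'n^'m)) ** (B::real^'p^'n) = k *\<^sub>R (A ** B)"
  by (simp add: scalar_matrix_assoc)

lemma sc_r: "(A::real^'n^'m) ** (k *\<^sub>R (B::real^'p^'n)) = k *\<^sub>R (A ** B)"
  by (simp add: matrix_scalar_ac scalar_matrix_assoc)

lemma mm_neg: "(A::real^'n^'m) ** (- B) = - (A ** B)"
  by (vector matrix_matrix_mult_def sum_negf)

theorem proposition7:
  fixes F G \<Sigma> R :: "real \<Rightarrow> real^'n^'n"
    and \<Psi> \<Psi>h P :: "real \<Rightarrow> real \<Rightarrow> real^'n^'n"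
    and T :: real and I :: "real set"
    and s t :: real and u \<epsilon> :: "real^'n"
  assumes contF: "continuous_on {0..T} F"
    and contG: "continuous_on {0..T} G"
    and Psi_deriv: "\<forall>s\<in>{0..T}. \<forall>t\<in>{0..T}.
          ((\<lambda>t. \<Psi> t s) has_vector_derivative (F t ** \<Psi> t s)) (at t within {0..T})"
    and Psi_init: "\<forall>s\<in>{0..T}. \<Psi> s s = mat 1"
    and Sigma_deriv: "\<forall>\<tau>\<in>{0..T}. (\<Sigma> has_vector_derivative
          (F \<tau> ** \<Sigma> \<tau> + \<Sigma> \<tau> ** transpose (F \<tau>) + G \<tau> ** transpose (G \<tau>))) (at \<tau> within {0..T})"
    and I_interval: "is_interval I" and I_sub: "I \<subseteq> {0..T}"
    and Sigma_pd: "\<forall>\<tau>\<in>I. pos_def_mat (\<Sigma> \<tau>)"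
    and R_inv: "\<forall>\<tau>\<in>I. invertible (R \<tau>)"
    and R_sq: "\<forall>\<tau>\<in>I. R \<tau> ** transpose (R \<tau>) = \<Sigma> \<tau>"
    and R_deriv: "\<forall>\<tau>\<in>I. (R has_vector_derivative
          ((F \<tau> + (1/2) *\<^sub>R (G \<tau> ** transpose (G \<tau>) ** matrix_inv (\<Sigma> \<tau>))) ** R \<tau>)) (at \<tau> within I)"
    and Psih_deriv: "\<forall>s\<in>I. \<forall>t\<in>I.
          ((\<lambda>t. \<Psi>h t s) has_vector_derivative
            ((F t + (1/2) *\<^sub>R (G t ** transpose (G t) ** matrix_inv (\<Sigma> t))) ** \<Psi>h t s)) (at t within I)"
    and Psih_init: "\<forall>s\<in>I. \<Psi>h s s = mat 1"
    and P_deriv: "\<forall>s\<in>I. \<forall>\<tau>\<in>I.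
          ((\<lambda>\<tau>. P s \<tau>) has_vector_derivative
            ((F \<tau> + (1/2) *\<^sub>R (G \<tau> ** transpose (G \<tau>) ** matrix_inv (\<Sigma> \<tau>))) ** P s \<tau>
             + P s \<tau> ** transpose (F \<tau> + (1/2) *\<^sub>R (G \<tau> ** transpose (G \<tau>) ** matrix_inv (\<Sigma> \<tau>)))))
            (at \<tau> within I)"
    and P_init: "\<forall>s\<in>I. P s s = 0"
    and s_in: "s \<in> I" and t_in: "t \<in> I"
  shows "P s t = 0 \<and>
    \<Psi> t s *v u + (\<Psi>h t s - \<Psi> t s) *v (R s *v \<epsilon>)
    = \<Psi> t s *v u + oint s t (\<lambda>\<tau>. (1/2) *\<^sub>R (\<Psi> t \<tau> ** G \<tau> ** transpose (G \<tau>) ** transpose (matrix_inv (R \<tau>)))) *v \<epsilon>"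
proof -
  define a where "a = min s t"
  define b where "b = max s t"
  define Fh where "Fh \<tau> = F \<tau> + (1/2) *\<^sub>R (G \<tau> ** transpose (G \<tau>) ** matrix_inv (\<Sigma> \<tau>))" for \<tau>
  define H where "H \<tau> = (1/2) *\<^sub>R (G \<tau> ** transpose (G \<tau>) ** transpose (matrix_inv (R \<tau>)))" for \<tau>
  have aI: "a \<in> I" and bI: "b \<in> I" using s_in t_in by (auto simp: a_def b_def min_def max_def)
  have JI: "{a..b} \<subseteq> I"
  proof
    fix x assume "x \<in> {a..b}"
    then have "a \<le> x" "x \<le> b" by auto
    then show "x \<in> I" using I_interval aI bI unfolding is_interval_1 by blast
  qed
  have J0T: "{a..b} \<subseteq> {0..T}" using JI I_sub by (meson order_trans)
  have sJ: "s \<in> {a..b}" and tJ: "t \<in> {a..b}" unfolding a_def b_def by auto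
  have T0: "0 \<le> T" using I_sub s_in by auto
  have invR: "invertible (R \<tau>)" if "\<tau> \<in> {a..b}" for \<tau> using R_inv JI that by auto
  have invS: "invertible (\<Sigma> \<tau>)" if "\<tau> \<in> {a..b}" for \<tau>
    using R_sq JI that invertible_mult[OF invR[OF that] transpose_invertible[OF invR[OF that]]] by auto
  have contS: "continuous_on {a..b} \<Sigma>"
    by (rule continuous_on_subset[OF deriv_cont J0T]) (use Sigma_deriv in blast)
  have contR: "continuous_on {a..b} R"
    by (rule continuous_on_subset[OF deriv_cont JI]) (use R_deriv in blast)
  have contF': "continuous_on {a..b} F" using contF J0T continuous_on_subset by blast
  have contG': "continuous_on {a..b} G" using contG J0T continuous_on_subset by blast
  have contSi: "continuous_on {a..b} (\<lambda>\<tau>. matrix_inv (\<Sigma> \<tau>))"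
    by (rule continuous_on_matrix_inv[OF contS invS])
  have contRi: "continuous_on {a..b} (\<lambda>\<tau>. matrix_inv (R \<tau>))"
    by (rule continuous_on_matrix_inv[OF contR invR])
  have contFh: "continuous_on {a..b} Fh" unfolding Fh_def
    by (intro continuous_intros contF' contG' contSi)
  have contH: "continuous_on {a..b} H" unfolding H_def
    by (intro continuous_intros contG' contRi)
  have within: "(f has_vector_derivative f') (at x within {a..b})" 
    if "(f has_vector_derivative f') (at x within I)" for f :: "real \<Rightarrow> real^'n^'n" and f' x
    using has_vector_derivative_within_subset[OF that JI] .
  have within0: "(f has_vector_derivative f') (at x within {a..b})" 
    if "(f has_vector_derivative f') (at x within {0..T})" for f :: "real \<Rightarrow> real^'n^'n" and f' x
    using has_vector_derivative_within_subset[OF that J0T] .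
  have P0: "P s t = 0"
  proof (rule lin_ode_zero[where A=Fh and B="\<lambda>\<tau>. transpose (Fh \<tau>)" and c=s, OF contFh _ _ _ sJ tJ])
    show "continuous_on {a..b} (\<lambda>\<tau>. transpose (Fh \<tau>))" using contFh by (intro continuous_intros)
    show "P s s = 0" using P_init s_in by auto
    fix y assume "y \<in> {a..b}"
    then show "((\<lambda>\<tau>. P s \<tau>) has_vector_derivative Fh y ** P s y + P s y ** transpose (Fh y)) (at y within {a..b})"
      using within[OF P_deriv[rule_format, OF s_in, of y]] JI unfolding Fh_def by auto
  qed
  have FhR: "Fh \<tau> ** R \<tau> = F \<tau> ** R \<tau> + H \<tau>" if "\<tau> \<in> {a..b}" for \<tau>
  proof -
    let ?N = "transpose (matrix_inv (R \<tau>))"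
    have "transpose (matrix_inv (R \<tau>) ** R \<tau>) = mat 1" by (simp add: minv(2)[OF invR[OF that]])
    then have 1: "transpose (R \<tau>) ** ?N = mat 1" by (simp add: matrix_transpose_mul)
    have "\<Sigma> \<tau> = R \<tau> ** transpose (R \<tau>)" using R_sq JI that by auto
    then have 2: "\<Sigma> \<tau> ** ?N = R \<tau>" by (simp add: matrix_mul_assoc[symmetric] 1)
    have "matrix_inv (\<Sigma> \<tau>) ** R \<tau> = (matrix_inv (\<Sigma> \<tau>) ** \<Sigma> \<tau>) ** ?N"
      by (simp add: 2 matrix_mul_assoc[symmetric])
    then have 3: "matrix_inv (\<Sigma> \<tau>) ** R \<tau> = ?N" by (simp add: minv(2)[OF invS[OF that]])
    show ?thesis unfolding Fh_def H_def
      by (simp add: mm_radd sc_l matrix_mul_assoc[symmetric] 3)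
  qed
  have Psih_R: "\<Psi>h t s ** R s = R t"
  proof -
    have "\<Psi>h t s ** R s - R t = 0"
    proof (rule lin_ode_zero[where Y="\<lambda>x. \<Psi>h x s ** R s - R x" and A=Fh and B="\<lambda>_. 0" and c=s, OF contFh _ _ _ sJ tJ])
      show "continuous_on {a..b} (\<lambda>_. 0::real^'n^'n)" by simp
      show "\<Psi>h s s ** R s - R s = 0" using Psih_init s_in by simp
      fix y assume y: "y \<in> {a..b}"
      then have yI: "y \<in> I" using JI by auto
      have d1: "((\<lambda>x. \<Psi>h x s ** R s) has_vector_derivative (Fh y ** \<Psi>h y s) ** R s) (at y within {a..b})"
        using mm_const_deriv[OF within[OF Psih_deriv[rule_format, OF s_in yI]], of "R s"] unfolding Fh_def .
      have d2: "(R has_vector_derivative Fh y ** R y) (at y within {a..b})"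
        using within[OF R_deriv[rule_format, OF yI]] unfolding Fh_def .
      show "((\<lambda>x. \<Psi>h x s ** R s - R x) has_vector_derivative Fh y ** (\<Psi>h y s ** R s - R y) + (\<Psi>h y s ** R s - R y) ** 0) (at y within {a..b})"
        using has_vector_derivative_diff[OF d1 d2] by (simp add: matrix_mul_assoc mm_ldiff)
    qed
    then show ?thesis by simp
  qed
  have semi: "\<Psi> x \<sigma> ** \<Psi> \<sigma> r = \<Psi> x r" if xx: "x\<in>{0..T}" "\<sigma>\<in>{0..T}" "r\<in>{0..T}" for x \<sigma> r
  proof -
    have "\<Psi> x \<sigma> ** \<Psi> \<sigma> r - \<Psi> x r = 0"
    proof (rule lin_ode_zero[where Y="\<lambda>x. \<Psi> x \<sigma> ** \<Psi> \<sigma> r - \<Psi> x r" and A=F and B="\<lambda>_. 0" and c=\<sigma>, OF contF _ _ _ xx(2) xx(1)])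
      show "continuous_on {0..T} (\<lambda>_. 0::real^'n^'n)" by simp
      show "\<Psi> \<sigma> \<sigma> ** \<Psi> \<sigma> r - \<Psi> \<sigma> r = 0" using Psi_init xx by simp
      fix y assume y: "y \<in> {0..T}"
      have d1: "((\<lambda>x. \<Psi> x \<sigma> ** \<Psi> \<sigma> r) has_vector_derivative (F y ** \<Psi> y \<sigma>) ** \<Psi> \<sigma> r) (at y within {0..T})"
        using mm_const_deriv[OF Psi_deriv[rule_format, OF xx(2) y]] .
      have d2: "((\<lambda>x. \<Psi> x r) has_vector_derivative F y ** \<Psi> y r) (at y within {0..T})"
        using Psi_deriv[rule_format, OF xx(3) y] .
      show "((\<lambda>x. \<Psi> x \<sigma> ** \<Psi> \<sigma> r - \<Psi> x r) has_vector_derivative F y ** (\<Psi> y \<sigma> ** \<Psi> \<sigma> r - \<Psi> y r) + (\<Psi> y \<sigma> ** \<Psi> \<sigma> r - \<Psi> y r) ** 0) (at y within {0..T})"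
        using has_vector_derivative_diff[OF d1 d2] by (simp add: matrix_mul_assoc mm_ldiff)
    qed
    then show ?thesis by simp
  qed
  have s0T: "s \<in> {0..T}" using s_in I_sub by auto
  have Jsub: "y \<in> {0..T}" if "y \<in> {a..b}" for y using that J0T by auto
  have PsiInv: "\<Psi> s \<tau> = matrix_inv (\<Psi> \<tau> s)" "invertible (\<Psi> \<tau> s)" if \<tau>: "\<tau> \<in> {a..b}" for \<tau>
  proof -
    have "\<Psi> s \<tau> ** \<Psi> \<tau> s = mat 1" using semi[OF s0T Jsub[OF \<tau>] s0T] Psi_init s0T by simp
    then show "invertible (\<Psi> \<tau> s)" "\<Psi> s \<tau> = matrix_inv (\<Psi> \<tau> s)"
      using invertible_left_inverse minv_unique by blast+
  qed
  have contPsi: "continuous_on {a..b} (\<lambda>\<tau>. \<Psi> \<tau> s)"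
    by (rule deriv_cont) (rule within0[OF Psi_deriv[rule_format, OF s0T Jsub]])
  have contPsiI: "continuous_on {a..b} (\<lambda>\<tau>. \<Psi> s \<tau>)"
    using continuous_on_matrix_inv[OF contPsi PsiInv(2)]
    by (rule continuous_on_cong[THEN iffD1, rotated -1]) (auto simp: PsiInv(1))
  define Q where "Q \<tau> = \<Psi> s \<tau> ** H \<tau>" for \<tau>
  have contQ: "continuous_on {a..b} Q" unfolding Q_def by (intro continuous_intros contPsiI contH)
  define Z where "Z x = \<Psi> x s ** (integral {a..x} Q - integral {a..s} Q)" for x
  define K where "K x = R x - \<Psi> x s ** R s" for x
  have KZ: "K t - Z t = 0"
  proof (rule lin_ode_zero[where Y="\<lambda>x. K x - Z x" and A=F and B="\<lambda>_. 0" and c=s, OF contF' _ _ _ sJ tJ])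
    show "continuous_on {a..b} (\<lambda>_. 0::real^'n^'n)" by simp
    show "K s - Z s = 0" using Psi_init s0T unfolding K_def Z_def by simp
    fix y assume y: "y \<in> {a..b}"
    then have yI: "y \<in> I" using JI by auto
    have dP: "((\<lambda>x. \<Psi> x s) has_vector_derivative F y ** \<Psi> y s) (at y within {a..b})"
      by (rule within0[OF Psi_deriv[rule_format, OF s0T Jsub[OF y]]])
    have dI: "((\<lambda>x. integral {a..x} Q - integral {a..s} Q) has_vector_derivative Q y - 0) (at y within {a..b})"
      by (intro has_vector_derivative_diff integral_has_vector_derivative[OF contQ y] has_vector_derivative_const)
    have QH: "\<Psi> y s ** Q y = H y"
      unfolding Q_def using semi[OF Jsub[OF y] s0T Jsub[OF y]] Psi_init Jsub[OF y]
      by (simp add: matrix_mul_assoc)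
    have dZ: "(Z has_vector_derivative H y + F y ** Z y) (at y within {a..b})"
      using bounded_bilinear.has_vector_derivative[OF bb_mm dP dI] QH
      unfolding Z_def by (simp add: matrix_mul_assoc)
    have dR: "(R has_vector_derivative F y ** R y + H y) (at y within {a..b})"
      using within[OF R_deriv[rule_format, OF yI]] FhR[OF y] unfolding Fh_def by simp
    have dK: "(K has_vector_derivative (F y ** R y + H y) - (F y ** \<Psi> y s) ** R s) (at y within {a..b})"
      unfolding K_def by (intro has_vector_derivative_diff dR mm_const_deriv dP)
    have eq: "(F y ** R y + H y) - (F y ** \<Psi> y s) ** R s - (H y + F y ** Z y) = F y ** (K y - Z y) + (K y - Z y) ** 0"
      unfolding K_def by (simp add: mm_ldiff matrix_add_ldistrib matrix_mul_assoc algebra_simps)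
    show "((\<lambda>x. K x - Z x) has_vector_derivative F y ** (K y - Z y) + (K y - Z y) ** 0) (at y within {a..b})"
      using has_vector_derivative_diff[OF dK dZ] unfolding eq .
  qed
  have integrand: "(1/2) *\<^sub>R (\<Psi> t \<tau> ** G \<tau> ** transpose (G \<tau>) ** transpose (matrix_inv (R \<tau>))) = \<Psi> t s ** Q \<tau>"
    if \<tau>: "\<tau> \<in> {a..b}" for \<tau>
    using semi[OF Jsub[OF tJ] s0T Jsub[OF \<tau>]]
    unfolding Q_def H_def by (simp add: matrix_mul_assoc sc_l sc_r)
  have lin: "integral {a..b} (\<lambda>\<tau>. \<Psi> t s ** Q \<tau>) = \<Psi> t s ** integral {a..b} Q"
    using integral_linear[OF integrable_continuous_interval[OF contQ] bounded_bilinear.bounded_linear_right[OF bb_mm, of "\<Psi> t s"]]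
    by (simp add: o_def)
  have Zt: "Z t = oint s t (\<lambda>\<tau>. (1/2) *\<^sub>R (\<Psi> t \<tau> ** G \<tau> ** transpose (G \<tau>) ** transpose (matrix_inv (R \<tau>))))"
    (is "_ = oint s t ?f")
  proof (cases "s \<le> t")
    case True
    then have ab: "a = s" "b = t" unfolding a_def b_def by auto
    have "oint s t (\<lambda>\<tau>. (1/2) *\<^sub>R (\<Psi> t \<tau> ** G \<tau> ** transpose (G \<tau>) ** transpose (matrix_inv (R \<tau>))))
        = integral {a..b} (\<lambda>\<tau>. \<Psi> t s ** Q \<tau>)"
    proof -
      have "oint s t ?f = integral {s..t} ?f" using True unfolding oint_def by (simp only: if_True)
      also have "\<dots> = integral {a..b} (\<lambda>\<tau>. \<Psi> t s ** Q \<tau>)" unfolding ab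
        by (rule integral_cong, rule integrand) (simp add: ab)
      finally show ?thesis .
    qed
    then show ?thesis using lin ab unfolding Z_def by simp
  next
    case False
    then have ab: "a = t" "b = s" unfolding a_def b_def by auto
    have "oint s t (\<lambda>\<tau>. (1/2) *\<^sub>R (\<Psi> t \<tau> ** G \<tau> ** transpose (G \<tau>) ** transpose (matrix_inv (R \<tau>))))
        = - integral {a..b} (\<lambda>\<tau>. \<Psi> t s ** Q \<tau>)"
    proof -
      have "oint s t ?f = - integral {t..s} ?f" using False unfolding oint_def by (simp only: if_False)
      also have "\<dots> = - integral {a..b} (\<lambda>\<tau>. \<Psi> t s ** Q \<tau>)" unfolding ab
        by (rule arg_cong[where f=uminus], rule integral_cong, rule integrand) (simp add: ab)
      finally show ?thesis .
    qed
    then show ?thesis using lin ab unfolding Z_def by (simp add: mm_ldiff mm_neg)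
  qed
  have main: "(\<Psi>h t s - \<Psi> t s) ** R s = oint s t (\<lambda>\<tau>. (1/2) *\<^sub>R (\<Psi> t \<tau> ** G \<tau> ** transpose (G \<tau>) ** transpose (matrix_inv (R \<tau>))))"
    using KZ Zt Psih_R unfolding K_def by (simp add: mm_rdiff)
  show ?thesis using P0 main by (simp add: matrix_vector_mul_assoc)
qed
end
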